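(* Let $n \geqslant 1$, let $\lambda$ be an integer partition with $\lambda_1+\ell(\lambda)-1=n$, and let $c \in \mathfrak{S}_{n+1}$ be a Coxeter element. Fix $k \in \{1,\ldots,n\}$ such that $s_k$ is final in $\mathsf{c}(\lambda)$, and $s_k$ is either initial or final in $c$. Then for every $a\in\mathbb{N}$ and every filling $f$ of $\lambda$, \[\mathcal{RSK}_{\lambda,c}(\mathrm{add}^a_{\lambda,k}(f)) = \mathrm{add}^a_{\lambda,k}(\mathcal{RSK}_{\lambda,c}(f)).\]
   Context: $s_i=(i,i+1)\in\mathfrak{S}_{n+1}$; $\ell(w)$ is the Coxeter length w.r.t. $\{s_1,\dots,s_n\}$. A Coxeter element is a product of $s_1,\dots,s_n$ each exactly once. $s$ is initial in $w$ if $\ell(sw)<\ell(w)$ and final in $w$ if $\ell(ws)<\ell(w)$. Ferrers diagram $\mathrm{Fer}(\lambda)=\{(i,j):j\le\lambda_i\}$. Row/column labels: label the unit segments of the south-east boundary of $\mathrm{Fer}(\lambda)$ by $1,\dots,n+1$ from top-right to bottom-left; rows and columns inherit labels; $\mathbf L$ = row labels, $\mathbf R$ = column labels; $[\ell,r]$ is the box with row label $\ell$ and column label $r$ (exists iff $\ell<r$). Every Coxeter element is a long cycle $(c_1=1<c_2<\dots<c_m=n+1>c_{m+1}>\dots>c_{n+1})$; $\mathsf{c}(\lambda)$ is the unique Coxeter element for which $\{c_2,\dots,c_{m-1}\}=\mathbf L\setminus\{1\}$ and $\{c_{m+1},\dots,c_{n+1}\}=\mathbf R\setminus\{n+1\}$.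 For $a\in\mathbb{N}$ and a filling $g$ of $\lambda$, $\mathrm{add}^a_{\lambda,k}(g)$ is the filling obtained from $g$ by adding $a$ to the value of the box $[k,k+1]$ only (under the hypothesis, $k\in\mathbf L$ and $k+1\in\mathbf R$). Diagonals $D_k(\lambda)=\{(i,j):\lambda_1+i-j=k\}$, $\delta_k=\max\{\min(i,j):(i,j)\in D_k(\lambda)\}$, $(i,j)\in D_k(\lambda)$ has coordinates $\langle k,\delta\rangle_\lambda$ with $\delta=\delta_k-\min(i,j)+1$. Greene–Kleitman: for acyclic $G$ and $g:G_0\to\mathbb{N}$, $M_t$ = max over $t$-tuples of (possibly one-vertex) directed paths of the sum of $g$ over the union of their vertices, $M_0=0$, $\mathrm{GK}_G(g)=(M_t-M_{t-1})_{t\ge1}$. $\mathrm{AR}(c)$ has vertices the transpositions $(i,j)$, $1\le i<j\le n+1$, arrows $(i,j)\to(i,c(j))$ if $i<c(j)$ and $(i,j)\to(c(i),j)$ if $c(i)<j$; $\mathrm{AR}^{[k]}(c)$ is the full subgraph on $(\ell,r)$, $\ell\le k<r$. $\mathrm{rep}_{\lambda,c}(f)(\ell,r)=f([\ell,r])$ if $\ell\in\mathbf L,r\in\mathbf R,\ell<r$, else $0$; $\mathcal{RSK}_{\lambda,c}(f)(\langle k,\delta\rangle_\lambda)$ is the $\delta$-th part of $\mathrm{GK}_{\mathrm{AR}^{[k]}(c)}$ of the restriction of $\mathrm{rep}_{\lambda,c}(f)$. *)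

theory Defs
  imports Main "HOL-Combinatorics.Transposition"
begin

text \<open>Permutations of {1..n+1} are functions nat => nat (fixing everything else).
  Products are compositions of functions: (u w)(x) = u (w x).\<close>

definition sgen :: "nat \<Rightarrow> nat \<Rightarrow> nat" where
  "sgen i = transpose i (Suc i)"

definition word_prod :: "nat list \<Rightarrow> nat \<Rightarrow> nat" where
  "word_prod ws = foldr (\<lambda>i w. sgen i \<circ> w) ws id"

definition coxeter_elem :: "nat \<Rightarrow> (nat \<Rightarrow> nat) \<Rightarrow> bool" where
  "coxeter_elem n w \<longleftrightarrow>
     (\<exists>ws. distinct ws \<and> set ws = {1..n} \<and> w = word_prod ws)"

definition cox_len :: "nat \<Rightarrow> (nat \<Rightarrow> nat) \<Rightarrow> nat" where
  "cox_len n w = (LEAST m. \<exists>ws. length ws = m \<and> set ws \<subseteq> {1..n} \<and> w = word_prod ws)"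

definition is_initial :: "nat \<Rightarrow> nat \<Rightarrow> (nat \<Rightarrow> nat) \<Rightarrow> bool" where
  "is_initial n k w \<longleftrightarrow> cox_len n (sgen k \<circ> w) < cox_len n w"

definition is_final :: "nat \<Rightarrow> nat \<Rightarrow> (nat \<Rightarrow> nat) \<Rightarrow> bool" where
  "is_final n k w \<longleftrightarrow> cox_len n (w \<circ> sgen k) < cox_len n w"

text \<open>A partition is a nonempty weakly decreasing list of positive parts;
  \<lambda>_i = lam ! (i - 1) (1-based), \<ell>(\<lambda>) = length lam.\<close>
definition is_partition :: "nat list \<Rightarrow> bool" where
  "is_partition lam \<longleftrightarrow> lam \<noteq> [] \<and> sorted_wrt (\<ge>) lam \<and> (\<forall>x\<in>set lam. 0 < x)"

definition part :: "nat list \<Rightarrow> nat \<Rightarrow> nat" where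
  "part lam i = lam ! (i - 1)"

definition Fer :: "nat list \<Rightarrow> (nat \<times> nat) set" where
  "Fer lam = {(i, j). 1 \<le> i \<and> i \<le> length lam \<and> 1 \<le> j \<and> j \<le> part lam i}"

definition col_len :: "nat list \<Rightarrow> nat \<Rightarrow> nat" where
  "col_len lam j = card {i. 1 \<le> i \<and> i \<le> length lam \<and> j \<le> part lam i}"

text \<open>Labels of the south-east boundary segments, numbered 1..n+1 from top-right
  to bottom-left.  The east segment of row i is preceded by the i-1 east segments of
  rows above it and by the \<lambda>_1 - \<lambda>_i south segments of the columns to the right of
  \<lambda>_i; the south segment of column j is preceded by the south segments of columns
  j+1..\<lambda>_1 and by the east segments of rows 1..\<lambda>'_j.\<close>
definition row_label :: "nat list \<Rightarrow> nat \<Rightarrow> nat" where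
  "row_label lam i = i + part lam 1 - part lam i"

definition col_label :: "nat list \<Rightarrow> nat \<Rightarrow> nat" where
  "col_label lam j = part lam 1 - j + col_len lam j + 1"

definition Lset :: "nat list \<Rightarrow> nat set" where
  "Lset lam = row_label lam ` {1..length lam}"

definition Rset :: "nat list \<Rightarrow> nat set" where
  "Rset lam = col_label lam ` {1..part lam 1}"

definition row_of :: "nat list \<Rightarrow> nat \<Rightarrow> nat" where
  "row_of lam l = (THE i. i \<in> {1..length lam} \<and> row_label lam i = l)"

definition col_of :: "nat list \<Rightarrow> nat \<Rightarrow> nat" where
  "col_of lam r = (THE j. j \<in> {1..part lam 1} \<and> col_label lam j = r)"

definition cyc_seq :: "nat \<Rightarrow> nat list \<Rightarrow> nat list" where
  "cyc_seq n lam = [1] @ sorted_list_of_set (Lset lam - {1}) @ [n + 1]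
                   @ rev (sorted_list_of_set (Rset lam - {n + 1}))"

definition c_lam :: "nat \<Rightarrow> nat list \<Rightarrow> nat \<Rightarrow> nat" where
  "c_lam n lam = (THE w. coxeter_elem n w \<and>
      (\<forall>i < n + 1. w (cyc_seq n lam ! i) = cyc_seq n lam ! (Suc i mod (n + 1))))"

text \<open>A directed graph is given by a vertex set V and an arrow relation E
  (only arrows between vertices of V are used: full subgraph on V).\<close>
definition is_dpath :: "'v set \<Rightarrow> ('v \<Rightarrow> 'v \<Rightarrow> bool) \<Rightarrow> 'v list \<Rightarrow> bool" where
  "is_dpath V E p \<longleftrightarrow> p \<noteq> [] \<and> set p \<subseteq> V \<and>
      (\<forall>i. Suc i < length p \<longrightarrow> E (p ! i) (p ! Suc i))"

definition GK_M :: "'v set \<Rightarrow> ('v \<Rightarrow> 'v \<Rightarrow> bool) \<Rightarrow> ('v \<Rightarrow> nat) \<Rightarrow> nat \<Rightarrow> nat" where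
  "GK_M V E g t = Max {sum g (\<Union>p\<in>set ps. set p) | ps.
       length ps = t \<and> (\<forall>p\<in>set ps. is_dpath V E p)}"

definition GK_part :: "'v set \<Rightarrow> ('v \<Rightarrow> 'v \<Rightarrow> bool) \<Rightarrow> ('v \<Rightarrow> nat) \<Rightarrow> nat \<Rightarrow> nat" where
  "GK_part V E g t = GK_M V E g t - GK_M V E g (t - 1)"

definition AR_arrow :: "(nat \<Rightarrow> nat) \<Rightarrow> nat \<times> nat \<Rightarrow> nat \<times> nat \<Rightarrow> bool" where
  "AR_arrow c v w \<longleftrightarrow>
     (let (i, j) = v in (i < c j \<and> w = (i, c j)) \<or> (c i < j \<and> w = (c i, j)))"

definition AR_sub_vertices :: "nat \<Rightarrow> nat \<Rightarrow> (nat \<times> nat) set" where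
  "AR_sub_vertices n k = {(l, r). 1 \<le> l \<and> l < r \<and> r \<le> n + 1 \<and> l \<le> k \<and> k < r}"

text \<open>A filling of \<lambda> is a map Fer(\<lambda>) -> nat, represented as a function on nat \<times> nat
  (values outside Fer(\<lambda>) are irrelevant).\<close>

definition rep :: "nat list \<Rightarrow> (nat \<times> nat \<Rightarrow> nat) \<Rightarrow> nat \<times> nat \<Rightarrow> nat" where
  "rep lam f v = (let (l, r) = v in
      if l \<in> Lset lam \<and> r \<in> Rset lam \<and> l < r then f (row_of lam l, col_of lam r) else 0)"

definition diag :: "nat list \<Rightarrow> nat \<Rightarrow> (nat \<times> nat) set" where
  "diag lam k = {(i, j) \<in> Fer lam. part lam 1 + i - j = k}"

definition delta_max :: "nat list \<Rightarrow> nat \<Rightarrow> nat" where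
  "delta_max lam k = Max ((\<lambda>(i, j). min i j) ` diag lam k)"

definition RSK :: "nat \<Rightarrow> nat list \<Rightarrow> (nat \<Rightarrow> nat) \<Rightarrow> (nat \<times> nat \<Rightarrow> nat) \<Rightarrow> nat \<times> nat \<Rightarrow> nat" where
  "RSK n lam c f b = (let (i, j) = b; k = part lam 1 + i - j;
       \<delta> = delta_max lam k - min i j + 1 in
     if b \<in> Fer lam then GK_part (AR_sub_vertices n k) (AR_arrow c) (rep lam f) \<delta> else 0)"

definition add_box :: "nat list \<Rightarrow> nat \<Rightarrow> nat \<Rightarrow> (nat \<times> nat \<Rightarrow> nat) \<Rightarrow> nat \<times> nat \<Rightarrow> nat" where
  "add_box lam k a g b = (let (i, j) = b in
      if b \<in> Fer lam \<and> row_label lam i = k \<and> col_label lam j = Suc k then g b + a else g b)"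

end

theory Submission
  imports Defs "HOL-Combinatorics.Cycles"
begin


lemma word_prod_Nil[simp]: "word_prod [] = id"
  by (simp add: word_prod_def)

lemma word_prod_Cons[simp]: "word_prod (i # ws) = sgen i \<circ> word_prod ws"
  by (simp add: word_prod_def)

lemma word_prod_append: "word_prod (xs @ ys) = word_prod xs \<circ> word_prod ys"
  by (induction xs) (simp_all add: comp_assoc)

lemma sgen_commute: "Suc j < i \<Longrightarrow> sgen i \<circ> sgen j = sgen j \<circ> sgen i"
  by (rule ext) (simp add: sgen_def transpose_def)

lemma sgen_word_commute: "\<forall>j\<in>set q. Suc j < i \<Longrightarrow> sgen i \<circ> word_prod q = word_prod q \<circ> sgen i"
proof (induction q)
  case Nil then show ?case by simp
next
  case (Cons j q)
  have "sgen i \<circ> word_prod (j # q) = (sgen i \<circ> sgen j) \<circ> word_prod q" by (simp add: comp_assoc)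
  also have "\<dots> = sgen j \<circ> (sgen i \<circ> word_prod q)"
  proof -
    have e: "sgen i \<circ> sgen j = sgen j \<circ> sgen i" using Cons.prems sgen_commute[of j i] by simp
    have "(sgen i \<circ> sgen j) \<circ> word_prod q = (sgen j \<circ> sgen i) \<circ> word_prod q" by (simp only: e)
    also have "\<dots> = sgen j \<circ> (sgen i \<circ> word_prod q)" by (rule comp_assoc)
    finally show ?thesis .
  qed
  also have "\<dots> = word_prod (j # q) \<circ> sgen i"
  proof -
    have ih: "sgen i \<circ> word_prod q = word_prod q \<circ> sgen i" using Cons.prems by (intro Cons.IH) simp
    show ?thesis by (simp only: ih word_prod_Cons comp_assoc)
  qed
  finally show ?case .
qed

lemma cycle_of_list_Cons: "ys \<noteq> [] \<Longrightarrow> cycle_of_list (z # ys) = transpose z (hd ys) \<circ> cycle_of_list ys"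
  by (cases ys) simp_all

lemma cycle_of_list_snoc: "cycle_of_list (zs @ [a]) \<circ> transpose a b = cycle_of_list (zs @ [a, b])"
proof (induction zs)
  case Nil then show ?case by simp
next
  case (Cons z zs)
  have "cycle_of_list ((z # zs) @ [a]) \<circ> transpose a b
      = transpose z (hd (zs @ [a])) \<circ> (cycle_of_list (zs @ [a]) \<circ> transpose a b)"
    by (simp add: cycle_of_list_Cons comp_assoc)
  also have "\<dots> = transpose z (hd (zs @ [a, b])) \<circ> cycle_of_list (zs @ [a, b])"
  proof -
    have h: "hd (zs @ [a]) = hd (zs @ [a, b])" by (cases zs) simp_all
    show ?thesis by (simp only: h Cons.IH)
  qed
  also have "\<dots> = cycle_of_list ((z # zs) @ [a, b])"
    by (simp add: cycle_of_list_Cons)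
  finally show ?case .
qed

lemma rot_last: "cs = xs @ a # ys \<Longrightarrow> rotate (length (xs @ [a])) cs = (ys @ xs) @ [a]"
  using rotate_append[of "xs @ [a]" ys] by simp

lemma rot_first: "cs = xs @ a # ys \<Longrightarrow> rotate (length xs) cs = a # ys @ xs"
  using rotate_append[of xs "a # ys"] by simp

lemma cox_cycle:
  "distinct ws \<Longrightarrow> set ws = {1..n} \<Longrightarrow>
   \<exists>cs. distinct cs \<and> set cs = {1..Suc n} \<and> word_prod ws = cycle_of_list cs"
proof (induction n arbitrary: ws)
  case 0
  then have "ws = []" by simp
  then show ?case by (intro exI[of _ "[1]"]) simp
next
  case (Suc n)
  have "Suc n \<in> set ws" by (simp only: Suc.prems(2)) simp
  then obtain p q where ws: "ws = p @ Suc n # q" by (meson split_list)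
  have d: "distinct (p @ q)" using Suc.prems(1) ws by simp
  have "set (p @ q) = set ws - {Suc n}" using Suc.prems(1) ws by auto
  also have "\<dots> = {1..Suc n} - {Suc n}" by (simp only: Suc.prems(2))
  also have "\<dots> = {1..n}" by auto
  finally have sp: "set (p @ q) = {1..n}" .
  from Suc.IH[OF d sp] obtain cs where cs: "distinct cs" "set cs = {1..Suc n}"
    "word_prod (p @ q) = cycle_of_list cs" by blast
  have c: "word_prod ws = word_prod p \<circ> (sgen (Suc n) \<circ> word_prod q)"
    using ws by (simp only: word_prod_append word_prod_Cons)
  have "Suc n \<in> set cs" by (simp only: cs(2)) simp
  then obtain xs ys where xs: "cs = xs @ Suc n # ys" by (meson split_list)
  have scs: "set cs = set xs \<union> set ys \<union> {Suc n}" using xs by auto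
  have nss: "Suc (Suc n) \<notin> set cs" by (simp only: cs(2)) simp
  show ?case
  proof (cases "n \<in> set q")
    case False
    have "\<forall>j\<in>set q. Suc j < Suc n"
    proof
      fix j assume "j \<in> set q"
      then have "j \<in> set (p @ q)" by simp
      then have "j \<in> {1..n}" by (simp only: sp)
      moreover have "j \<noteq> n" using False \<open>j \<in> set q\<close> by auto
      ultimately have "j \<in> {1..n}" "j \<noteq> n" by auto
      then show "Suc j < Suc n" by simp
    qed
    then have com: "sgen (Suc n) \<circ> word_prod q = word_prod q \<circ> sgen (Suc n)"
      by (rule sgen_word_commute)
    have r: "cycle_of_list cs = cycle_of_list ((ys @ xs) @ [Suc n])"
      using cycle_of_list_rotate_independent[OF cs(1), of "length (xs @ [Suc n])"] rot_last[OF xs]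
      by simp
    have "word_prod ws = word_prod p \<circ> (word_prod q \<circ> sgen (Suc n))"
      by (simp only: c com)
    also have "\<dots> = word_prod (p @ q) \<circ> sgen (Suc n)"
      by (simp only: word_prod_append comp_assoc)
    also have "\<dots> = cycle_of_list ((ys @ xs) @ [Suc n]) \<circ> transpose (Suc n) (Suc (Suc n))"
      by (simp only: cs(3) r sgen_def)
    also have "\<dots> = cycle_of_list ((ys @ xs) @ [Suc n, Suc (Suc n)])"
      by (rule cycle_of_list_snoc)
    finally have "word_prod ws = cycle_of_list ((ys @ xs) @ [Suc n, Suc (Suc n)])" .
    moreover have "distinct ((ys @ xs) @ [Suc n, Suc (Suc n)])"
      using cs(1) xs nss by auto
    moreover have "set ((ys @ xs) @ [Suc n, Suc (Suc n)]) = set cs \<union> {Suc (Suc n)}"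
      using scs by auto
    moreover have "set cs \<union> {Suc (Suc n)} = {1..Suc (Suc n)}"
      by (simp only: cs(2)) auto
    ultimately show ?thesis by metis
  next
    case True
    then have "n \<notin> set p" using Suc.prems(1) ws by auto
    have "\<forall>j\<in>set p. Suc j < Suc n"
    proof
      fix j assume "j \<in> set p"
      then have "j \<in> set (p @ q)" by simp
      then have "j \<in> {1..n}" by (simp only: sp)
      moreover have "j \<noteq> n" using \<open>n \<notin> set p\<close> \<open>j \<in> set p\<close> by auto
      ultimately have "j \<in> {1..n}" "j \<noteq> n" by auto
      then show "Suc j < Suc n" by simp
    qed
    then have com: "sgen (Suc n) \<circ> word_prod p = word_prod p \<circ> sgen (Suc n)"
      by (rule sgen_word_commute)
    have r: "cycle_of_list cs = cycle_of_list (Suc n # ys @ xs)"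
      using cycle_of_list_rotate_independent[OF cs(1), of "length xs"] rot_first[OF xs]
      by simp
    have "word_prod ws = (word_prod p \<circ> sgen (Suc n)) \<circ> word_prod q"
      by (simp only: c comp_assoc)
    also have "\<dots> = sgen (Suc n) \<circ> word_prod (p @ q)"
      by (simp only: com[symmetric] word_prod_append comp_assoc)
    also have "\<dots> = transpose (Suc (Suc n)) (Suc n) \<circ> cycle_of_list (Suc n # ys @ xs)"
      by (simp only: cs(3) r sgen_def transpose_commute)
    also have "\<dots> = cycle_of_list (Suc (Suc n) # Suc n # ys @ xs)"
      by simp
    finally have "word_prod ws = cycle_of_list (Suc (Suc n) # Suc n # ys @ xs)" .
    moreover have "distinct (Suc (Suc n) # Suc n # ys @ xs)"
      using cs(1) xs nss by auto
    moreover have "set (Suc (Suc n) # Suc n # ys @ xs) = set cs \<union> {Suc (Suc n)}"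
      using scs by auto
    moreover have "set cs \<union> {Suc (Suc n)} = {1..Suc (Suc n)}"
      by (simp only: cs(2)) auto
    ultimately show ?thesis by metis
  qed
qed

lemma cycle_trans:
  assumes "distinct cs" "x \<in> set cs" "y \<in> set cs"
  shows "\<exists>d. (cycle_of_list cs ^^ d) x = y"
proof -
  obtain i j where ij: "i < length cs" "cs ! i = x" "j < length cs" "cs ! j = y"
    using assms by (meson in_set_conv_nth)
  let ?d = "j + length cs - i"
  have "(cycle_of_list cs ^^ ?d) x = map (cycle_of_list cs ^^ ?d) cs ! i"
    using ij by simp
  also have "\<dots> = rotate ?d cs ! i" using cyclic_rotation[OF assms(1)] by simp
  also have "\<dots> = cs ! ((?d + i) mod length cs)" using ij by (simp add: nth_rotate)
  also have "(?d + i) mod length cs = j" using ij by simp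
  finally show ?thesis using ij by blast
qed



definition crs :: "(nat \<Rightarrow> nat) \<Rightarrow> nat \<Rightarrow> nat" where
  "crs w i = card {l. l \<le> i \<and> i < w l}"

definition Xs :: "nat \<Rightarrow> (nat \<Rightarrow> nat) \<Rightarrow> nat" where
  "Xs n w = (\<Sum>j\<in>{1..n}. crs w j)"

lemma bij_word_prod: "bij (word_prod ws)"
proof (induction ws)
  case Nil show ?case by (simp only: word_prod_Nil bij_id)
next
  case (Cons i ws)
  have "bij (sgen i)" by (simp add: sgen_def)
  then show ?case using Cons by (simp only: word_prod_Cons bij_comp)
qed

lemma sgen_gt: "j \<noteq> i \<Longrightarrow> (j < sgen i x) = (j < x)"
  by (auto simp: sgen_def transpose_def)

lemma sgen_le: "j \<noteq> i \<Longrightarrow> (sgen i x \<le> j) = (x \<le> j)"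
  by (auto simp: sgen_def transpose_def)

lemma crs_sgen_other: "j \<noteq> i \<Longrightarrow> crs (\<lambda>x. sgen i (w x)) j = crs w j"
  by (simp add: crs_def sgen_gt)

lemma card_preimage_le1:
  assumes "inj w" shows "card {l. w l = i} \<le> 1"
proof (cases "\<exists>l0. w l0 = i")
  case True
  then obtain l0 where "w l0 = i" by blast
  then have "{l. w l = i} = {l0}" using assms by (auto dest: injD)
  then show ?thesis by simp
next
  case False then show ?thesis by simp
qed

lemma finite_preimage: "inj w \<Longrightarrow> finite {l. w l = (i::nat)}"
  using finite_vimageI[of "{i}" w] by (simp add: vimage_def)

lemma crs_sgen_same:
  assumes "inj w" shows "crs (\<lambda>x. sgen i (w x)) i \<le> crs w i + 1"
proof -
  let ?A = "{l. l \<le> i \<and> i < w l}" and ?B = "{l. w l = i}"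
  have fA: "finite ?A" by (rule finite_subset[of _ "{..i}"]) auto
  have fB: "finite ?B" using finite_preimage[OF assms] .
  have "{l. l \<le> i \<and> i < sgen i (w l)} \<subseteq> ?A \<union> ?B"
    by (auto simp: sgen_def transpose_def)
  then have "crs (\<lambda>x. sgen i (w x)) i \<le> card (?A \<union> ?B)"
    unfolding crs_def using fA fB by (intro card_mono) auto
  also have "\<dots> \<le> card ?A + card ?B" by (rule card_Un_le)
  also have "\<dots> \<le> crs w i + 1" using card_preimage_le1[OF assms, of i] by (simp add: crs_def)
  finally show ?thesis .
qed

lemma Xs_sgen: assumes "inj w" "i \<in> {1..n}" shows "Xs n (\<lambda>x. sgen i (w x)) \<le> Xs n w + 1"
proof -
  have "Xs n (\<lambda>x. sgen i (w x)) \<le> (\<Sum>j\<in>{1..n}. crs w j + (if j = i then 1 else 0))"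
    unfolding Xs_def
  proof (intro sum_mono)
    fix j assume "j \<in> {1..n}"
    show "crs (\<lambda>x. sgen i (w x)) j \<le> crs w j + (if j = i then 1 else 0)"
      using crs_sgen_same[OF assms(1), of i] crs_sgen_other[of j i w] by (cases "j = i") simp_all
  qed
  also have "\<dots> = Xs n w + 1" using assms(2) by (simp add: Xs_def sum.distrib)
  finally show ?thesis .
qed

lemma Xs_id: "Xs n (\<lambda>x. x) = 0"
  by (simp add: Xs_def crs_def)

lemma Xs_word: "set ws \<subseteq> {1..n} \<Longrightarrow> Xs n (word_prod ws) \<le> length ws"
proof (induction ws)
  case Nil then show ?case by (simp add: Xs_id)
next
  case (Cons i ws)
  have "inj (word_prod ws)" using bij_word_prod bij_is_inj by blast
  then have "Xs n (word_prod (i # ws)) \<le> Xs n (word_prod ws) + 1"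
    using Cons.prems Xs_sgen[of "word_prod ws" i n] by (simp add: comp_def)
  moreover have "Xs n (word_prod ws) \<le> length ws" using Cons by auto
  ultimately show ?case by (simp only: length_Cons)
qed

lemma cox_len_lower:
  assumes "set ws0 \<subseteq> {1..n}" "w = word_prod ws0"
  shows "Xs n w \<le> cox_len n w"
proof -
  let ?P = "\<lambda>m. \<exists>ws. length ws = m \<and> set ws \<subseteq> {1..n} \<and> w = word_prod ws"
  have "?P (length ws0)" using assms by blast
  then have "?P (cox_len n w)" unfolding cox_len_def by (rule LeastI)
  then obtain ws where "length ws = cox_len n w" "set ws \<subseteq> {1..n}" "w = word_prod ws" by blast
  then show ?thesis using Xs_word[of ws n] by simp
qed

lemma cox_len_upper:
  assumes "set ws \<subseteq> {1..n}" shows "cox_len n (word_prod ws) \<le> length ws"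
  unfolding cox_len_def using assms by (intro Least_le) blast

lemma word_preserve: "i \<notin> set ws \<Longrightarrow> (word_prod ws x \<le> i) = (x \<le> i)"
  by (induction ws arbitrary: x) (auto simp: sgen_le)

lemma crs_cox: "distinct ws \<Longrightarrow> crs (word_prod ws) i = (if i \<in> set ws then 1 else 0)"
proof (induction ws)
  case Nil then show ?case by (simp add: crs_def)
next
  case (Cons j ws)
  have wc: "word_prod (j # ws) = (\<lambda>x. sgen j (word_prod ws x))" by (simp add: comp_def)
  show ?case
  proof (cases "j = i")
    case False
    then show ?thesis using Cons by (simp only: wc crs_sgen_other) simp
  next
    case True
    let ?W = "word_prod ws"
    have ni: "i \<notin> set ws" using Cons.prems True by simp
    obtain l0 where l0: "?W l0 = i" using bij_word_prod[of ws] by (metis bij_pointE)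
    have "{l. l \<le> i \<and> i < sgen i (?W l)} = {l0}"
    proof (rule set_eqI)
      fix l
      show "(l \<in> {l. l \<le> i \<and> i < sgen i (?W l)}) = (l \<in> {l0})"
      proof
        assume "l \<in> {l. l \<le> i \<and> i < sgen i (?W l)}"
        then have "l \<le> i" "i < sgen i (?W l)" by auto
        then have "?W l \<le> i" using word_preserve[OF ni] by simp
        with \<open>i < sgen i (?W l)\<close> have "?W l = i" by (auto simp: sgen_def transpose_def split: if_splits)
        then show "l \<in> {l0}" using l0 bij_word_prod[of ws] by (auto dest: bij_is_inj injD)
      next
        assume "l \<in> {l0}"
        then show "l \<in> {l. l \<le> i \<and> i < sgen i (?W l)}"
          using l0 word_preserve[OF ni, of l0] by (simp add: sgen_def)
      qed
    qed
    then show ?thesis using True by (simp only: wc crs_def) simp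
  qed
qed

lemma crs_pos: "l \<le> j \<Longrightarrow> j < w l \<Longrightarrow> 1 \<le> crs w j"
proof -
  assume a: "l \<le> j" "j < w l"
  have "finite {l. l \<le> j \<and> j < w l}" by (rule finite_subset[of _ "{..j}"]) auto
  moreover have "l \<in> {l. l \<le> j \<and> j < w l}" using a by simp
  ultimately have "0 < card {l. l \<le> j \<and> j < w l}" by (auto simp: card_gt_0_iff)
  then show ?thesis unfolding crs_def by simp
qed

lemma cox_len_cox:
  assumes d: "distinct ws" and s: "set ws = {1..n}" shows "cox_len n (word_prod ws) \<le> n"
proof -
  have "length ws = n" using distinct_card[OF d] s by simp
  moreover have "set ws \<subseteq> {1..n}" using s by simp
  ultimately show ?thesis using cox_len_upper[of ws n] by simp
qed

lemma Xs_ge: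
  assumes "\<forall>j\<in>{1..n}. \<exists>l\<le>j. j < w l" shows "n \<le> Xs n w"
proof -
  have "(\<Sum>j\<in>{1..n}. (1::nat)) \<le> Xs n w"
    unfolding Xs_def
  proof (intro sum_mono)
    fix j assume "j \<in> {1..n}"
    then obtain l where "l \<le> j" "j < w l" using assms by blast
    then show "1 \<le> crs w j" by (rule crs_pos)
  qed
  then show ?thesis by simp
qed



lemma final_facts:
  assumes ws: "distinct ws" "set ws = {1..n}" and c: "c = word_prod ws"
    and k: "k \<in> {1..n}" and fin: "is_final n k c"
  shows "k < c k \<and> c (Suc k) \<le> k"
proof (rule ccontr)
  assume H: "\<not> (k < c k \<and> c (Suc k) \<le> k)"
  have cs1: "crs c j = 1" if "j \<in> {1..n}" for j
  proof -
    have "j \<in> set ws" using that by (simp only: ws(2))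
    then show ?thesis by (simp only: c crs_cox[OF ws(1)] if_True)
  qed
  have ex: "\<exists>l\<le>j. j < c l" if "j \<in> {1..n}" for j
  proof (rule ccontr)
    assume "\<not> ?thesis"
    then have "{l. l \<le> j \<and> j < c l} = {}" by auto
    then have "crs c j = 0" unfolding crs_def by simp
    then show False using cs1[OF that] by simp
  qed
  have "\<forall>j\<in>{1..n}. \<exists>l\<le>j. j < (c \<circ> sgen k) l"
  proof
    fix j assume j: "j \<in> {1..n}"
    show "\<exists>l\<le>j. j < (c \<circ> sgen k) l"
    proof (cases "j = k")
      case False
      obtain l0 where "l0 \<le> j" "j < c l0" using ex[OF j] by blast
      then show ?thesis using False sgen_le[OF False, of "sgen k l0"]
        by (intro exI[of _ "sgen k l0"]) (simp add: sgen_def)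
    next
      case True
      show ?thesis
      proof (cases "k < c (Suc k)")
        case True
        then show ?thesis using \<open>j = k\<close> by (intro exI[of _ k]) (simp add: sgen_def)
      next
        case False
        then have "c k \<le> k" using H by simp
        obtain l0 where "l0 \<le> k" "k < c l0" using ex[OF j] True by blast
        then have "l0 \<noteq> k" "l0 \<noteq> Suc k" using \<open>c k \<le> k\<close> by auto
        then show ?thesis using \<open>l0 \<le> k\<close> \<open>k < c l0\<close> True
          by (intro exI[of _ l0]) (simp add: sgen_def)
      qed
    qed
  qed
  then have "n \<le> Xs n (c \<circ> sgen k)" by (rule Xs_ge)
  also have "\<dots> \<le> cox_len n (c \<circ> sgen k)"
  proof (rule cox_len_lower[of "ws @ [k]"])
    show "set (ws @ [k]) \<subseteq> {1..n}" using k by (simp only: set_append ws(2)) auto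
    show "c \<circ> sgen k = word_prod (ws @ [k])"
      by (simp only: c word_prod_append word_prod_Cons word_prod_Nil comp_id)
  qed
  also have "\<dots> < cox_len n c" using fin by (simp add: is_final_def)
  also have "\<dots> \<le> n" using cox_len_cox[OF ws] c by simp
  finally show False by simp
qed

lemma initial_facts:
  assumes ws: "distinct ws" "set ws = {1..n}" and c: "c = word_prod ws"
    and k: "k \<in> {1..n}" and ini: "is_initial n k c"
  shows "\<forall>l\<le>k. c l \<noteq> k \<and> c l \<le> Suc k"
proof (rule ccontr)
  assume H: "\<not> ?thesis"
  then obtain l1 where l1: "l1 \<le> k" "c l1 = k \<or> Suc k < c l1" by force
  have cs1: "crs c j = 1" if "j \<in> {1..n}" for j
  proof -
    have "j \<in> set ws" using that by (simp only: ws(2))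
    then show ?thesis by (simp only: c crs_cox[OF ws(1)] if_True)
  qed
  have ex: "\<exists>l\<le>j. j < c l" if "j \<in> {1..n}" for j
  proof (rule ccontr)
    assume "\<not> ?thesis"
    then have "{l. l \<le> j \<and> j < c l} = {}" by auto
    then have "crs c j = 0" unfolding crs_def by simp
    then show False using cs1[OF that] by simp
  qed
  have "\<forall>j\<in>{1..n}. \<exists>l\<le>j. j < (sgen k \<circ> c) l"
  proof
    fix j assume j: "j \<in> {1..n}"
    show "\<exists>l\<le>j. j < (sgen k \<circ> c) l"
    proof (cases "j = k")
      case False
      obtain l0 where "l0 \<le> j" "j < c l0" using ex[OF j] by blast
      then show ?thesis using sgen_gt[OF False] by auto
    next
      case True
      then show ?thesis using l1 by (intro exI[of _ l1]) (auto simp: sgen_def transpose_def)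
    qed
  qed
  then have "n \<le> Xs n (sgen k \<circ> c)" by (rule Xs_ge)
  also have "\<dots> \<le> cox_len n (sgen k \<circ> c)"
  proof (rule cox_len_lower[of "k # ws"])
    show "set (k # ws) \<subseteq> {1..n}" using k by (simp only: list.set ws(2)) auto
    show "sgen k \<circ> c = word_prod (k # ws)"
      by (simp only: c word_prod_Cons)
  qed
  also have "\<dots> < cox_len n c" using ini by (simp add: is_initial_def)
  also have "\<dots> \<le> n" using cox_len_cox[OF ws] c by simp
  finally show False by simp
qed



inductive reach :: "'v set \<Rightarrow> ('v \<Rightarrow> 'v \<Rightarrow> bool) \<Rightarrow> 'v \<Rightarrow> 'v \<Rightarrow> bool" for V E where
  refl: "u \<in> V \<Longrightarrow> reach V E u u"
| step: "u \<in> V \<Longrightarrow> E u w \<Longrightarrow> reach V E w z \<Longrightarrow> reach V E u z"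

lemma reach_inV: "reach V E u z \<Longrightarrow> u \<in> V \<and> z \<in> V"
  by (induction rule: reach.induct) auto

lemma reach_trans: "reach V E u w \<Longrightarrow> reach V E w z \<Longrightarrow> reach V E u z"
  by (induction rule: reach.induct) (auto intro: reach.step)

lemma reach_snoc: "reach V E u w \<Longrightarrow> E w z \<Longrightarrow> z \<in> V \<Longrightarrow> reach V E u z"
proof -
  assume a: "reach V E u w" "E w z" "z \<in> V"
  have "w \<in> V" using reach_inV[OF a(1)] by simp
  have "reach V E z z" using a(3) by (rule reach.refl)
  then have "reach V E w z" by (rule reach.step[of w V E z z, OF \<open>w \<in> V\<close> a(2)])
  then show ?thesis by (rule reach_trans[OF a(1)])
qed

lemma is_dpath_Cons:
  "is_dpath V E (x # p) = (x \<in> V \<and> (p \<noteq> [] \<longrightarrow> E x (hd p) \<and> is_dpath V E p))"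
proof
  assume h: "is_dpath V E (x # p)"
  have "x \<in> V" using h by (simp add: is_dpath_def)
  moreover have "E x (hd p) \<and> is_dpath V E p" if "p \<noteq> []"
  proof
    have "E ((x # p) ! 0) ((x # p) ! Suc 0)" using h that unfolding is_dpath_def by auto
    then show "E x (hd p)" using that by (simp add: hd_conv_nth)
    show "is_dpath V E p" unfolding is_dpath_def
    proof (intro conjI allI impI)
      show "p \<noteq> []" by fact
      show "set p \<subseteq> V" using h by (simp add: is_dpath_def)
      fix i assume "Suc i < length p"
      then have "E ((x # p) ! Suc i) ((x # p) ! Suc (Suc i))" using h unfolding is_dpath_def by auto
      then show "E (p ! i) (p ! Suc i)" by simp
    qed
  qed
  ultimately show "x \<in> V \<and> (p \<noteq> [] \<longrightarrow> E x (hd p) \<and> is_dpath V E p)" by blast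
next
  assume h: "x \<in> V \<and> (p \<noteq> [] \<longrightarrow> E x (hd p) \<and> is_dpath V E p)"
  show "is_dpath V E (x # p)" unfolding is_dpath_def
  proof (intro conjI allI impI)
    show "x # p \<noteq> []" by simp
    show "set (x # p) \<subseteq> V" using h by (cases "p = []") (auto simp: is_dpath_def)
    fix i assume i: "Suc i < length (x # p)"
    then have pn: "p \<noteq> []" by auto
    show "E ((x # p) ! i) ((x # p) ! Suc i)"
    proof (cases i)
      case 0 then show ?thesis using h pn by (simp add: hd_conv_nth)
    next
      case (Suc j)
      then have "Suc j < length p" using i by simp
      then show ?thesis using h pn Suc unfolding is_dpath_def by auto
    qed
  qed
qed

lemma is_dpath_snoc: "is_dpath V E p \<Longrightarrow> E (last p) w \<Longrightarrow> w \<in> V \<Longrightarrow> is_dpath V E (p @ [w])"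
proof (induction p)
  case Nil then show ?case by (simp add: is_dpath_def)
next
  case (Cons x p)
  show ?case
  proof (cases "p = []")
    case True
    then show ?thesis using Cons.prems by (simp add: is_dpath_Cons)
  next
    case False
    then have "is_dpath V E p" "E x (hd p)" "x \<in> V" using Cons.prems(1) by (auto simp: is_dpath_Cons)
    moreover have "E (last p) w" using Cons.prems(2) False by simp
    ultimately have "is_dpath V E (p @ [w])" using Cons.IH Cons.prems(3) by blast
    then show ?thesis using \<open>E x (hd p)\<close> \<open>x \<in> V\<close> False by (simp add: is_dpath_Cons)
  qed
qed

lemma extend_sink:
  "reach V E u z \<Longrightarrow> is_dpath V E p \<Longrightarrow> last p = u \<Longrightarrow>
   \<exists>p'. is_dpath V E p' \<and> set p \<subseteq> set p' \<and> z \<in> set p'"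
proof (induction arbitrary: p rule: reach.induct)
  case (refl u)
  then show ?case by (intro exI[of _ p]) (auto simp: is_dpath_def)
next
  case (step u w z)
  have "w \<in> V" using reach_inV[OF step.hyps(3)] by simp
  then have "is_dpath V E (p @ [w])" using step by (intro is_dpath_snoc) auto
  then obtain p' where "is_dpath V E p'" "set (p @ [w]) \<subseteq> set p'" "z \<in> set p'"
    using step.IH[of "p @ [w]"] by auto
  then show ?case by auto
qed

lemma extend_source:
  "reach V E x u \<Longrightarrow> is_dpath V E p \<Longrightarrow> hd p = u \<Longrightarrow>
   \<exists>p'. is_dpath V E p' \<and> set p \<subseteq> set p' \<and> hd p' = x"
proof (induction arbitrary: p rule: reach.induct)
  case (refl u)
  then show ?case by (intro exI[of _ p]) auto
next
  case (step x w u)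
  obtain p' where p': "is_dpath V E p'" "set p \<subseteq> set p'" "hd p' = w"
    using step.IH step.prems by blast
  have "p' \<noteq> []" using p'(1) by (simp add: is_dpath_def)
  then have "is_dpath V E (x # p')" using p' step.hyps by (simp add: is_dpath_Cons)
  then show ?case using p' by (intro exI[of _ "x # p'"]) auto
qed

definition GKS :: "'v set \<Rightarrow> ('v \<Rightarrow> 'v \<Rightarrow> bool) \<Rightarrow> ('v \<Rightarrow> nat) \<Rightarrow> nat \<Rightarrow> nat set" where
  "GKS V E g t = {sum g (\<Union>p\<in>set ps. set p) | ps. length ps = t \<and> (\<forall>p\<in>set ps. is_dpath V E p)}"

lemma GK_M_GKS: "GK_M V E g t = Max (GKS V E g t)"
  by (simp add: GK_M_def GKS_def)

lemma union_sub: "\<forall>p\<in>set ps. is_dpath V E p \<Longrightarrow> (\<Union>p\<in>set ps. set p) \<subseteq> V"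
  by (auto simp: is_dpath_def)

lemma GKS_finite: assumes "finite V" shows "finite (GKS V E g t)"
proof -
  have "GKS V E g t \<subseteq> sum g ` Pow V"
  proof
    fix y assume "y \<in> GKS V E g t"
    then obtain ps where ps: "\<forall>p\<in>set ps. is_dpath V E p" "y = sum g (\<Union>p\<in>set ps. set p)"
      unfolding GKS_def by blast
    have "(\<Union>p\<in>set ps. set p) \<in> Pow V" using union_sub[OF ps(1)] by simp
    then show "y \<in> sum g ` Pow V" using ps(2) by (rule rev_image_eqI)
  qed
  then show ?thesis using assms by (meson finite_Pow_iff finite_imageI finite_subset)
qed

lemma GKS_nonempty: assumes "v \<in> V" shows "GKS V E g t \<noteq> {}"
proof -
  have "is_dpath V E [v]" using assms by (simp add: is_dpath_def)
  then have "sum g (\<Union>p\<in>set (replicate t [v]). set p) \<in> GKS V E g t"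
    unfolding GKS_def by (intro CollectI exI[of _ "replicate t [v]"]) auto
  then show ?thesis by blast
qed

lemma GK_M_zero: "GK_M V E g 0 = 0"
proof -
  have "GKS V E g 0 = {0}"
  proof (rule set_eqI)
    fix y
    show "(y \<in> GKS V E g 0) = (y \<in> {0})"
    proof
      assume "y \<in> GKS V E g 0"
      then obtain ps where "length ps = 0" "y = sum g (\<Union>p\<in>set ps. set p)" unfolding GKS_def by blast
      then show "y \<in> {0}" by simp
    next
      assume "y \<in> {0}"
      then have "y = sum g (\<Union>p\<in>set []. set p)" by simp
      then show "y \<in> GKS V E g 0" unfolding GKS_def by force
    qed
  qed
  then show ?thesis by (simp add: GK_M_GKS)
qed

lemma sum_add_delta:
  assumes "finite U"
  shows "sum (\<lambda>x. g x + (if x = v then a else 0)) U = sum g U + (if v \<in> U then a else (0::nat))"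
  using assms by (simp add: sum.distrib)

lemma GK_M_add:
  assumes fin: "finite V" and v: "v \<in> V" and t: "1 \<le> t"
    and ext: "\<And>p. is_dpath V E p \<Longrightarrow> \<exists>p'. is_dpath V E p' \<and> set p \<subseteq> set p' \<and> v \<in> set p'"
  shows "GK_M V E (\<lambda>x. g x + (if x = v then a else 0)) t = GK_M V E g t + a"
proof -
  let ?g' = "\<lambda>x. g x + (if x = v then a else 0)"
  have f1: "finite (GKS V E g t)" "finite (GKS V E ?g' t)" using GKS_finite[OF fin] by auto
  have n1: "GKS V E g t \<noteq> {}" "GKS V E ?g' t \<noteq> {}" using GKS_nonempty[OF v] by auto
  have le: "Max (GKS V E ?g' t) \<le> Max (GKS V E g t) + a"
  proof (rule Max.boundedI[OF f1(2) n1(2)])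
    fix y assume "y \<in> GKS V E ?g' t"
    then obtain ps where ps: "length ps = t" "\<forall>p\<in>set ps. is_dpath V E p"
      and y: "y = sum ?g' (\<Union>p\<in>set ps. set p)" unfolding GKS_def by blast
    let ?U = "\<Union>p\<in>set ps. set p"
    have fU: "finite ?U" using union_sub[OF ps(2)] fin finite_subset by blast
    have "y = sum g ?U + (if v \<in> ?U then a else 0)" using y sum_add_delta[OF fU] by simp
    also have "\<dots> \<le> sum g ?U + a" by simp
    also have "sum g ?U \<le> Max (GKS V E g t)"
    proof (rule Max_ge[OF f1(1)])
      show "sum g ?U \<in> GKS V E g t" unfolding GKS_def using ps by blast
    qed
    finally show "y \<le> Max (GKS V E g t) + a" by simp
  qed
  have ge: "Max (GKS V E g t) + a \<le> Max (GKS V E ?g' t)"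
  proof -
    have "Max (GKS V E g t) \<in> GKS V E g t" using f1(1) n1(1) by (rule Max_in)
    then obtain ps where ps: "length ps = t" "\<forall>p\<in>set ps. is_dpath V E p"
      and m: "Max (GKS V E g t) = sum g (\<Union>p\<in>set ps. set p)" unfolding GKS_def by blast
    obtain p rest where pr: "ps = p # rest" using ps(1) t by (cases ps) auto
    have "is_dpath V E p" using ps(2) pr by simp
    then obtain p' where p': "is_dpath V E p'" "set p \<subseteq> set p'" "v \<in> set p'" using ext by blast
    let ?ps = "p' # rest"
    let ?U = "\<Union>p\<in>set ps. set p" and ?U' = "\<Union>p\<in>set ?ps. set p"
    have ps': "length ?ps = t" "\<forall>p\<in>set ?ps. is_dpath V E p" using ps pr p' by auto
    have fU: "finite ?U'" using union_sub[OF ps'(2)] fin finite_subset by blast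
    have sub: "?U \<subseteq> ?U'" using pr p' by auto
    have vU: "v \<in> ?U'" using p' by auto
    have "sum g ?U \<le> sum g ?U'" by (rule sum_mono2[OF fU sub]) simp
    then have "Max (GKS V E g t) + a \<le> sum g ?U' + a" using m by simp
    also have "\<dots> = sum ?g' ?U'" using sum_add_delta[OF fU] vU by simp
    also have "\<dots> \<le> Max (GKS V E ?g' t)"
    proof (rule Max_ge[OF f1(2)])
      show "sum ?g' ?U' \<in> GKS V E ?g' t" unfolding GKS_def using ps' by blast
    qed
    finally show ?thesis .
  qed
  show ?thesis using le ge by (simp add: GK_M_GKS)
qed

lemma GK_part_add:
  assumes fin: "finite V" and v: "v \<in> V" and d: "1 \<le> \<delta>"
    and ext: "\<And>p. is_dpath V E p \<Longrightarrow> \<exists>p'. is_dpath V E p' \<and> set p \<subseteq> set p' \<and> v \<in> set p'"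
  shows "GK_part V E (\<lambda>x. g x + (if x = v then a else 0)) \<delta> = GK_part V E g \<delta> + (if \<delta> = 1 then a else 0)"
proof (cases "\<delta> = 1")
  case True
  then show ?thesis using GK_M_add[OF fin v _ ext] by (simp add: GK_part_def GK_M_zero)
next
  case False
  then have "1 \<le> \<delta> - 1" using d by simp
  then show ?thesis using False GK_M_add[OF fin v _ ext] d by (simp add: GK_part_def)
qed

lemma GK_M_cong:
  assumes "\<And>x. x \<in> V \<Longrightarrow> g x = h x"
  shows "GK_M V E g t = GK_M V E h t"
proof -
  have "GKS V E g t = GKS V E h t"
  proof -
    have sh: "sum g (\<Union>p\<in>set ps. set p) = sum h (\<Union>p\<in>set ps. set p)" if "\<forall>p\<in>set ps. is_dpath V E p" for ps
      using union_sub[OF that] assms by (intro sum.cong) auto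
    show ?thesis
    proof (rule set_eqI)
      fix y
      show "(y \<in> GKS V E g t) = (y \<in> GKS V E h t)"
      proof
        assume "y \<in> GKS V E g t"
        then obtain ps where ps: "length ps = t" "\<forall>p\<in>set ps. is_dpath V E p" "y = sum g (\<Union>p\<in>set ps. set p)"
          unfolding GKS_def by blast
        then have "y = sum h (\<Union>p\<in>set ps. set p)" using sh[OF ps(2)] by simp
        then show "y \<in> GKS V E h t" using ps(1,2) unfolding GKS_def by blast
      next
        assume "y \<in> GKS V E h t"
        then obtain ps where ps: "length ps = t" "\<forall>p\<in>set ps. is_dpath V E p" "y = sum h (\<Union>p\<in>set ps. set p)"
          unfolding GKS_def by blast
        then have "y = sum g (\<Union>p\<in>set ps. set p)" using sh[OF ps(2)] by simp
        then show "y \<in> GKS V E g t" using ps(1,2) unfolding GKS_def by blast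
      qed
    qed
  qed
  then show ?thesis by (simp add: GK_M_GKS)
qed

lemma GK_part_cong:
  assumes "\<And>x. x \<in> V \<Longrightarrow> g x = h x"
  shows "GK_part V E g t = GK_part V E h t"
  unfolding GK_part_def using GK_M_cong[of V g h E t, OF assms] GK_M_cong[of V g h E "t - 1", OF assms]
  by simp



lemma cyc_maps: "distinct cs \<Longrightarrow> x \<in> set cs \<Longrightarrow> cycle_of_list cs x \<in> set cs"
  using cycle_is_surj[of cs] by blast

lemma cyc_pow_maps: "distinct cs \<Longrightarrow> x \<in> set cs \<Longrightarrow> (cycle_of_list cs ^^ d) x \<in> set cs"
  by (induction d) (simp_all add: cyc_maps)

lemma cyc_inj: "inj (cycle_of_list cs)"
  using permutation_bijective[OF permutation_of_cycle[of cs]] bij_is_inj by blast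

lemma least_pow:
  assumes "\<exists>d. (f ^^ d) x = (y::nat)"
  obtains d where "(f ^^ d) x = y" "\<forall>d'<d. (f ^^ d') x \<noteq> y"
proof -
  let ?d = "LEAST d. (f ^^ d) x = y"
  have "(f ^^ ?d) x = y" using assms by (rule LeastI_ex)
  moreover have "\<forall>d'<?d. (f ^^ d') x \<noteq> y" using not_less_Least by blast
  ultimately show ?thesis using that by blast
qed

lemma pow_shift: "(f ^^ d) (f x) = (f ^^ Suc d) x"
  by (simp only: funpow_Suc_right comp_apply)

lemma pow_min_shift: "\<forall>d'<Suc d. (f ^^ d') x \<noteq> y \<Longrightarrow> \<forall>d'<d. (f ^^ d') (f x) \<noteq> y"
proof (intro allI impI)
  fix d' assume a: "\<forall>d'<Suc d. (f ^^ d') x \<noteq> y" "d' < d"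
  have "Suc d' < Suc d" using a(2) by simp
  then have h: "(f ^^ Suc d') x \<noteq> y" using a(1) by blast
  have e: "(f ^^ d') (f x) = (f ^^ Suc d') x" by (rule pow_shift)
  show "(f ^^ d') (f x) \<noteq> y" using h unfolding e .
qed

lemma pow_min0: "\<forall>d'<Suc d. (f ^^ d') x \<noteq> y \<Longrightarrow> x \<noteq> y"
proof -
  assume "\<forall>d'<Suc d. (f ^^ d') x \<noteq> y"
  then have "(f ^^ 0) x \<noteq> y" by blast
  then show ?thesis by simp
qed

lemma card_one_eq: "card S = 1 \<Longrightarrow> a \<in> S \<Longrightarrow> b \<in> S \<Longrightarrow> a = b"
  by (erule card_1_singletonE) simp

lemma ar_reach_final:
  assumes cs: "distinct cs" "set cs = {1..Suc n}" and c: "c = cycle_of_list cs"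
    and k: "1 \<le> k" "k \<le> n"
    and f1: "k < c k" and f2: "c (Suc k) \<le> k"
    and f3: "\<forall>l\<le>k. l \<noteq> k \<longrightarrow> c l \<le> k"
    and f4: "\<forall>r. k < r \<longrightarrow> r \<le> Suc n \<longrightarrow> r \<noteq> Suc k \<longrightarrow> k < c r"
    and u: "u \<in> AR_sub_vertices n k"
  shows "reach (AR_sub_vertices n k) (AR_arrow c) u (k, Suc k)"
proof -
  let ?V = "AR_sub_vertices n k" and ?E = "AR_arrow c"
  have inV: "((l, r) \<in> ?V) = (1 \<le> l \<and> l < r \<and> r \<le> Suc n \<and> l \<le> k \<and> k < r)" for l r
    by (simp add: AR_sub_vertices_def)
  have cm: "c x \<in> {1..Suc n}" if "x \<in> {1..Suc n}" for x
    using cyc_maps[OF cs(1), of x] that cs(2) c by simp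
  have step1: "\<And>l. (l, r) \<in> ?V \<Longrightarrow> (c ^^ d) l = k \<Longrightarrow> (\<forall>d'<d. (c ^^ d') l \<noteq> k) \<Longrightarrow>
      reach ?V ?E (l, r) (k, r)" for d r
  proof (induction d)
    case 0
    then show ?case by (simp add: reach.refl)
  next
    case (Suc d l)
    have lk: "l \<noteq> k" using Suc.prems(3) using pow_min0[OF Suc.prems(3)] by auto
    have lr: "1 \<le> l" "l < r" "r \<le> Suc n" "l \<le> k" "k < r" using Suc.prems(1) inV by auto
    have cl: "c l \<le> k" using f3 lk lr by simp
    have cl1: "1 \<le> c l" using cm[of l] lr by simp
    have V2: "(c l, r) \<in> ?V" using cl cl1 lr inV by simp
    have E2: "?E (l, r) (c l, r)" using cl lr by (simp add: AR_arrow_def)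
    have "(c ^^ d) (c l) = k" using Suc.prems(2) by (simp only: pow_shift)
    moreover have "\<forall>d'<d. (c ^^ d') (c l) \<noteq> k" using Suc.prems(3) by (rule pow_min_shift)
    ultimately have R: "reach ?V ?E (c l, r) (k, r)" using Suc.IH V2 by blast
    show ?case by (rule reach.step[OF Suc.prems(1) E2 R])
  qed
  have step2: "\<And>r. (k, r) \<in> ?V \<Longrightarrow> (c ^^ d) r = Suc k \<Longrightarrow> (\<forall>d'<d. (c ^^ d') r \<noteq> Suc k) \<Longrightarrow>
      reach ?V ?E (k, r) (k, Suc k)" for d
  proof (induction d)
    case 0
    then show ?case by (simp add: reach.refl)
  next
    case (Suc d r)
    have rk: "r \<noteq> Suc k" using Suc.prems(3) using pow_min0[OF Suc.prems(3)] by auto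
    have lr: "k < r" "r \<le> Suc n" using Suc.prems(1) inV by auto
    have cr: "k < c r" using f4 rk lr by simp
    have cr1: "c r \<le> Suc n" using cm[of r] lr k by simp
    have V2: "(k, c r) \<in> ?V" using cr cr1 k inV by simp
    have E2: "?E (k, r) (k, c r)" using cr by (simp add: AR_arrow_def)
    have "(c ^^ d) (c r) = Suc k" using Suc.prems(2) by (simp only: pow_shift)
    moreover have "\<forall>d'<d. (c ^^ d') (c r) \<noteq> Suc k" using Suc.prems(3) by (rule pow_min_shift)
    ultimately have R: "reach ?V ?E (k, c r) (k, Suc k)" using Suc.IH V2 by blast
    show ?case by (rule reach.step[OF Suc.prems(1) E2 R])
  qed
  obtain l r where ulr: "u = (l, r)" by (cases u)
  have lr: "1 \<le> l" "l < r" "r \<le> Suc n" "l \<le> k" "k < r" using u ulr inV by auto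
  have "\<exists>d. (c ^^ d) l = k" using cycle_trans[OF cs(1), of l k] lr k cs(2) c by simp
  then obtain d where d: "(c ^^ d) l = k" "\<forall>d'<d. (c ^^ d') l \<noteq> k" by (rule least_pow)
  have r1: "reach ?V ?E (l, r) (k, r)" using step1[OF _ d] u ulr by simp
  have "\<exists>d. (c ^^ d) r = Suc k" using cycle_trans[OF cs(1), of r "Suc k"] lr k cs(2) c by simp
  then obtain d2 where d2: "(c ^^ d2) r = Suc k" "\<forall>d'<d2. (c ^^ d') r \<noteq> Suc k" by (rule least_pow)
  have "(k, r) \<in> ?V" using lr k inV by simp
  then have r2: "reach ?V ?E (k, r) (k, Suc k)" using step2[OF _ d2] by simp
  show ?thesis using reach_trans[OF r1 r2] ulr by simp
qed

lemma ar_reach_initial: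
  assumes cs: "distinct cs" "set cs = {1..Suc n}" and c: "c = cycle_of_list cs"
    and k: "1 \<le> k" "k \<le> n"
    and i1: "\<forall>l\<le>k. c l \<noteq> k \<and> c l \<le> Suc k"
    and u: "u \<in> AR_sub_vertices n k"
  shows "reach (AR_sub_vertices n k) (AR_arrow c) (k, Suc k) u"
proof -
  let ?V = "AR_sub_vertices n k" and ?E = "AR_arrow c"
  have inV: "((l, r) \<in> ?V) = (1 \<le> l \<and> l < r \<and> r \<le> Suc n \<and> l \<le> k \<and> k < r)" for l r
    by (simp add: AR_sub_vertices_def)
  have cpm: "(c ^^ d) x \<in> {1..Suc n}" if "x \<in> {1..Suc n}" for x d
    using cyc_pow_maps[OF cs(1), of x d] that cs(2) c by simp
  have I1: "x \<le> k" if "y \<le> k" "y \<noteq> k" "c x = y" for x y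
  proof (rule ccontr)
    assume "\<not> x \<le> k"
    then have xk: "k < x" by simp
    let ?A = "insert x {..k}"
    have sub: "c ` ?A \<subseteq> {..Suc k} - {k}"
    proof
      fix z assume "z \<in> c ` ?A"
      then obtain w where w: "w \<in> ?A" "z = c w" by blast
      show "z \<in> {..Suc k} - {k}"
      proof (cases "w = x")
        case True then show ?thesis using w that by simp
      next
        case False then have "w \<le> k" using w by simp
        then show ?thesis using w i1 by simp
      qed
    qed
    have inj: "inj_on c ?A" unfolding c by (rule inj_on_subset[OF cyc_inj subset_UNIV])
    have "card ?A \<le> card ({..Suc k} - {k})"
      by (rule card_inj_on_le[OF inj sub]) simp
    moreover have "card ?A = Suc (Suc k)" using xk by simp
    moreover have "card ({..Suc k} - {k}) = Suc k" by simp
    ultimately show False by simp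
  qed
  have step1: "\<And>r. (k, r) \<in> ?V \<Longrightarrow> (c ^^ d) (Suc k) = r \<Longrightarrow> (\<forall>d'<d. (c ^^ d') (Suc k) \<noteq> r) \<Longrightarrow>
      reach ?V ?E (k, Suc k) (k, r)" for d
  proof (induction d)
    case 0
    then show ?case by (simp add: reach.refl)
  next
    case (Suc d r)
    let ?x = "(c ^^ d) (Suc k)"
    have cx: "c ?x = r" using Suc.prems(2) by simp
    have rk: "r \<noteq> Suc k" using Suc.prems(3) using pow_min0[OF Suc.prems(3)] by auto
    have lr: "k < r" "r \<le> Suc n" using Suc.prems(1) inV by auto
    have xk: "k < ?x"
    proof (rule ccontr)
      assume "\<not> k < ?x"
      then have "c ?x \<le> Suc k" using i1 by simp
      then show False using cx rk lr by simp
    qed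
    have x1: "?x \<le> Suc n" using cpm[of "Suc k" d] k by simp
    have V2: "(k, ?x) \<in> ?V" using xk x1 k inV by simp
    have E2: "?E (k, ?x) (k, r)" using cx lr by (simp add: AR_arrow_def)
    have "\<forall>d'<d. (c ^^ d') (Suc k) \<noteq> ?x"
    proof (intro allI impI)
      fix d' assume "d' < d"
      show "(c ^^ d') (Suc k) \<noteq> ?x"
      proof
        assume "(c ^^ d') (Suc k) = ?x"
        then have "(c ^^ Suc d') (Suc k) = r" using cx by simp
        then show False using Suc.prems(3) \<open>d' < d\<close> by auto
      qed
    qed
    then have R: "reach ?V ?E (k, Suc k) (k, ?x)" using Suc.IH V2 by blast
    show ?case by (rule reach_snoc[OF R E2 Suc.prems(1)])
  qed
  have step2: "\<And>l. (l, r) \<in> ?V \<Longrightarrow> (c ^^ d) k = l \<Longrightarrow> (\<forall>d'<d. (c ^^ d') k \<noteq> l) \<Longrightarrow>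
      reach ?V ?E (k, r) (l, r)" for d r
  proof (induction d)
    case 0
    then show ?case by (simp add: reach.refl)
  next
    case (Suc d l)
    let ?x = "(c ^^ d) k"
    have cx: "c ?x = l" using Suc.prems(2) by simp
    have lk: "l \<noteq> k" using Suc.prems(3) using pow_min0[OF Suc.prems(3)] by auto
    have lr: "1 \<le> l" "l < r" "r \<le> Suc n" "l \<le> k" "k < r" using Suc.prems(1) inV by auto
    have xk: "?x \<le> k" using I1[OF lr(4) lk cx] .
    have x1: "1 \<le> ?x" using cpm[of k d] k by simp
    have V2: "(?x, r) \<in> ?V" using xk x1 lr inV by simp
    have E2: "?E (?x, r) (l, r)" using cx lr by (simp add: AR_arrow_def)
    have "\<forall>d'<d. (c ^^ d') k \<noteq> ?x"
    proof (intro allI impI)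
      fix d' assume "d' < d"
      show "(c ^^ d') k \<noteq> ?x"
      proof
        assume "(c ^^ d') k = ?x"
        then have "(c ^^ Suc d') k = l" using cx by simp
        then show False using Suc.prems(3) \<open>d' < d\<close> by auto
      qed
    qed
    then have R: "reach ?V ?E (k, r) (?x, r)" using Suc.IH V2 by blast
    show ?case by (rule reach_snoc[OF R E2 Suc.prems(1)])
  qed
  obtain l r where ulr: "u = (l, r)" by (cases u)
  have lr: "1 \<le> l" "l < r" "r \<le> Suc n" "l \<le> k" "k < r" using u ulr inV by auto
  have "\<exists>d. (c ^^ d) (Suc k) = r" using cycle_trans[OF cs(1), of "Suc k" r] lr k cs(2) c by simp
  then obtain d where d: "(c ^^ d) (Suc k) = r" "\<forall>d'<d. (c ^^ d') (Suc k) \<noteq> r" by (rule least_pow)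
  have "(k, r) \<in> ?V" using lr k inV by simp
  then have r1: "reach ?V ?E (k, Suc k) (k, r)" using step1[OF _ d] by simp
  have "\<exists>d. (c ^^ d) k = l" using cycle_trans[OF cs(1), of k l] lr k cs(2) c by simp
  then obtain d2 where d2: "(c ^^ d2) k = l" "\<forall>d'<d2. (c ^^ d') k \<noteq> l" by (rule least_pow)
  have r2: "reach ?V ?E (k, r) (l, r)" using step2[OF _ d2] u ulr by simp
  show ?thesis using reach_trans[OF r1 r2] ulr by simp
qed

lemma final_more:
  assumes c: "c = cycle_of_list cs" and one: "crs c k = 1"
    and f1: "k < c k" and f2: "c (Suc k) \<le> k"
  shows "(\<forall>l\<le>k. l \<noteq> k \<longrightarrow> c l \<le> k) \<and> (\<forall>r. k < r \<longrightarrow> r \<noteq> Suc k \<longrightarrow> k < c r)"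
proof (intro conjI allI impI)
  fix l assume l: "l \<le> k" "l \<noteq> k"
  show "c l \<le> k"
  proof (rule ccontr)
    assume "\<not> c l \<le> k"
    then have m1: "l \<in> {l. l \<le> k \<and> k < c l}" using l by simp
    have m2: "k \<in> {l. l \<le> k \<and> k < c l}" using f1 by simp
    have "l = k" using card_one_eq[OF _ m1 m2] one unfolding crs_def by simp
    then show False using l(2) by simp
  qed
next
  fix r assume r: "k < r" "r \<noteq> Suc k"
  show "k < c r"
  proof (rule ccontr)
    assume "\<not> k < c r"
    then have cr: "c r \<le> k" by simp
    have f3: "c l \<le> k" if "l < k" for l
    proof (rule ccontr)
      assume "\<not> c l \<le> k"
      then have m1: "l \<in> {l. l \<le> k \<and> k < c l}" using that by simp
      have m2: "k \<in> {l. l \<le> k \<and> k < c l}" using f1 by simp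
      have "l = k" using card_one_eq[OF _ m1 m2] one unfolding crs_def by simp
      then show False using that by simp
    qed
    let ?A = "insert r (insert (Suc k) {..<k})"
    have sub: "c ` ?A \<subseteq> {..k}"
    proof
      fix z assume "z \<in> c ` ?A"
      then obtain w where w: "w \<in> ?A" "z = c w" by blast
      then have "w = r \<or> w = Suc k \<or> w < k" by auto
      then show "z \<in> {..k}" using w(2) cr f2 f3 by auto
    qed
    have inj: "inj_on c ?A" unfolding c by (rule inj_on_subset[OF cyc_inj subset_UNIV])
    have "card ?A \<le> card {..k}"
      by (rule card_inj_on_le[OF inj sub]) simp
    moreover have "card ?A = Suc (Suc k)" using r by simp
    ultimately show False by simp
  qed
qed



context
  fixes lam :: "nat list"
  assumes P: "is_partition lam"
begin

lemma part_mono: "1 \<le> i \<Longrightarrow> i \<le> i' \<Longrightarrow> i' \<le> length lam \<Longrightarrow> part lam i' \<le> part lam i"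
proof -
  assume a: "1 \<le> i" "i \<le> i'" "i' \<le> length lam"
  show ?thesis
  proof (cases "i = i'")
    case True then show ?thesis by simp
  next
    case False
    then have "i - 1 < i' - 1" "i' - 1 < length lam" using a by auto
    moreover have "sorted_wrt (\<ge>) lam" using P by (simp add: is_partition_def)
    ultimately have "lam ! (i' - 1) \<le> lam ! (i - 1)" using sorted_wrt_nth_less by fastforce
    then show ?thesis unfolding Defs.part_def .
  qed
qed

lemma part_le1: "1 \<le> i \<Longrightarrow> i \<le> length lam \<Longrightarrow> part lam i \<le> part lam 1"
  using part_mono[of 1 i] by simp

lemma row_label_mono: "1 \<le> i \<Longrightarrow> i < i' \<Longrightarrow> i' \<le> length lam \<Longrightarrow> row_label lam i < row_label lam i'"
proof -
  assume a: "1 \<le> i" "i < i'" "i' \<le> length lam"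
  have "part lam i' \<le> part lam i" using part_mono[of i i'] a by simp
  moreover have "part lam i \<le> part lam 1" using part_le1[of i] a by simp
  moreover have "part lam i' \<le> part lam 1" using part_le1[of i'] a by simp
  ultimately show ?thesis using a unfolding row_label_def by linarith
qed

lemma row_label_inj: "i \<in> {1..length lam} \<Longrightarrow> i' \<in> {1..length lam} \<Longrightarrow> row_label lam i = row_label lam i' \<Longrightarrow> i = i'"
  using row_label_mono[of i i'] row_label_mono[of i' i] by (cases i i' rule: linorder_cases) auto

lemma col_len_anti: "j \<le> j' \<Longrightarrow> col_len lam j' \<le> col_len lam j"
  unfolding col_len_def
  by (intro card_mono) (auto intro: finite_subset[of _ "{1..length lam}"])

lemma col_label_mono: "1 \<le> j \<Longrightarrow> j < j' \<Longrightarrow> j' \<le> part lam 1 \<Longrightarrow> col_label lam j' < col_label lam j"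
proof -
  assume a: "1 \<le> j" "j < j'" "j' \<le> part lam 1"
  have "col_len lam j' \<le> col_len lam j" using col_len_anti a by simp
  then show ?thesis using a unfolding col_label_def by linarith
qed

lemma col_label_inj: "j \<in> {1..part lam 1} \<Longrightarrow> j' \<in> {1..part lam 1} \<Longrightarrow> col_label lam j = col_label lam j' \<Longrightarrow> j = j'"
  using col_label_mono[of j j'] col_label_mono[of j' j] by (cases j j' rule: linorder_cases) auto

lemma col_len_ge: assumes "(i0, j) \<in> Fer lam" shows "i0 \<le> col_len lam j"
proof -
  have "{1..i0} \<subseteq> {i. 1 \<le> i \<and> i \<le> length lam \<and> j \<le> part lam i}"
  proof
    fix i assume "i \<in> {1..i0}"
    then have "1 \<le> i" "i \<le> i0" "i0 \<le> length lam" "j \<le> part lam i0" using assms by (auto simp: Fer_def)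
    moreover have "part lam i0 \<le> part lam i" using part_mono calculation by simp
    ultimately show "i \<in> {i. 1 \<le> i \<and> i \<le> length lam \<and> j \<le> part lam i}" by simp
  qed
  then have "card {1..i0} \<le> col_len lam j" unfolding col_len_def
    by (intro card_mono) (auto intro: finite_subset[of _ "{1..length lam}"])
  then show ?thesis by simp
qed

lemma Fer_bounds: "(i, j) \<in> Fer lam \<Longrightarrow> 1 \<le> i \<and> i \<le> length lam \<and> 1 \<le> j \<and> j \<le> part lam i \<and> part lam i \<le> part lam 1"
  using part_le1 by (auto simp: Fer_def)

lemma corner:
  assumes b: "(i0, j0) \<in> Fer lam" and r: "row_label lam i0 = k" and c: "col_label lam j0 = Suc k"
  shows "part lam i0 = j0 \<and> col_len lam j0 = i0 \<and> part lam 1 + i0 - j0 = k"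
proof -
  have fb: "1 \<le> i0" "i0 \<le> length lam" "1 \<le> j0" "j0 \<le> part lam i0" "part lam i0 \<le> part lam 1"
    using Fer_bounds[OF b] by auto
  have cl: "i0 \<le> col_len lam j0" using col_len_ge[OF b] .
  have e1: "i0 + part lam 1 - part lam i0 = k" using r by (simp add: row_label_def)
  have e2: "part lam 1 - j0 + col_len lam j0 + 1 = Suc k" using c by (simp add: col_label_def)
  show ?thesis using fb cl e1 e2 by linarith
qed

lemma diag_less:
  assumes b: "(i0, j0) \<in> Fer lam" and pj: "part lam i0 = j0"
    and ij: "(i, j) \<in> Fer lam" and d: "part lam 1 + i - j = part lam 1 + i0 - j0"
    and ne: "(i, j) \<noteq> (i0, j0)"
  shows "min i j < min i0 j0"
proof -
  have fb0: "1 \<le> i0" "i0 \<le> length lam" "j0 \<le> part lam 1" using Fer_bounds[OF b] by auto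
  have fb: "1 \<le> i" "i \<le> length lam" "j \<le> part lam i" "part lam i \<le> part lam 1" using Fer_bounds[OF ij] by auto
  have e: "i + j0 = i0 + j" using d fb0 fb by linarith
  have "\<not> i0 < i"
  proof
    assume "i0 < i"
    then have "part lam i \<le> part lam i0" using part_mono[of i0 i] fb0 fb by simp
    moreover have "j0 < j" using e \<open>i0 < i\<close> by linarith
    ultimately show False using pj fb by linarith
  qed
  moreover have "i \<noteq> i0" using e ne by auto
  ultimately have "i < i0" "j < j0" using e by auto
  then show ?thesis by (auto simp: min_def)
qed

lemma Fer_finite: "finite (Fer lam)"
proof -
  have "Fer lam \<subseteq> {1..length lam} \<times> {1..part lam 1}" using Fer_bounds by force
  then show ?thesis by (rule finite_subset) simp
qed

lemma delta_corner:
  assumes b: "(i0, j0) \<in> Fer lam" and pj: "part lam i0 = j0"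
  shows "delta_max lam (part lam 1 + i0 - j0) = min i0 j0"
proof -
  let ?D = "diag lam (part lam 1 + i0 - j0)"
  have fD: "finite ?D" using Fer_finite by (rule finite_subset[rotated]) (auto simp: diag_def)
  have mem: "(i0, j0) \<in> ?D" using b by (simp add: diag_def)
  have "Max ((\<lambda>(i, j). min i j) ` ?D) = min i0 j0"
  proof (rule Max_eqI)
    show "finite ((\<lambda>(i, j). min i j) ` ?D)" using fD by simp
    show "min i0 j0 \<in> (\<lambda>(i, j). min i j) ` ?D" using mem by force
    fix y assume "y \<in> (\<lambda>(i, j). min i j) ` ?D"
    then obtain i j where ij: "(i, j) \<in> ?D" "y = min i j" by auto
    then have "(i, j) \<in> Fer lam" "part lam 1 + i - j = part lam 1 + i0 - j0" by (auto simp: diag_def)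
    then show "y \<le> min i0 j0" using diag_less[OF b pj] ij(2) by (cases "(i, j) = (i0, j0)") force+
  qed
  then show ?thesis by (simp add: delta_max_def)
qed

lemma row_of_eq: "i \<in> {1..length lam} \<Longrightarrow> row_of lam (row_label lam i) = i"
  unfolding row_of_def by (rule the_equality) (auto intro: row_label_inj)

lemma col_of_eq: "j \<in> {1..part lam 1} \<Longrightarrow> col_of lam (col_label lam j) = j"
  unfolding col_of_def by (rule the_equality) (auto intro: col_label_inj)

lemma rep_add:
  assumes b: "(i0, j0) \<in> Fer lam" and r: "row_label lam i0 = k" and c: "col_label lam j0 = Suc k"
  shows "rep lam (add_box lam k a f) = (\<lambda>x. rep lam f x + (if x = (k, Suc k) then a else 0))"
proof
  fix x :: "nat \<times> nat"
  obtain l r' where x: "x = (l, r')" by (cases x)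
  have fb: "i0 \<in> {1..length lam}" "j0 \<in> {1..part lam 1}" using Fer_bounds[OF b] by auto
  have kL: "k \<in> Lset lam" unfolding Lset_def by (rule rev_image_eqI[of i0 _ k "row_label lam", OF fb(1) r[symmetric]])
  have kR: "Suc k \<in> Rset lam" unfolding Rset_def by (rule rev_image_eqI[of j0 _ "Suc k" "col_label lam", OF fb(2) c[symmetric]])
  show "rep lam (add_box lam k a f) x = rep lam f x + (if x = (k, Suc k) then a else 0)"
  proof (cases "l \<in> Lset lam \<and> r' \<in> Rset lam \<and> l < r'")
    case True
    then obtain i j where ij: "i \<in> {1..length lam}" "row_label lam i = l"
      "j \<in> {1..part lam 1}" "col_label lam j = r'" unfolding Lset_def Rset_def by blast
    have ro: "row_of lam l = i" using row_of_eq[OF ij(1)] ij(2) by simp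
    have co: "col_of lam r' = j" using col_of_eq[OF ij(3)] ij(4) by simp
    show ?thesis
    proof (cases "x = (k, Suc k)")
      case True
      then have "l = k" "r' = Suc k" using x by auto
      then have "i = i0" "j = j0" using row_label_inj[OF ij(1) fb(1)] col_label_inj[OF ij(3) fb(2)] ij r c by auto
      then show ?thesis using True x ro co b r c \<open>l = k\<close> \<open>r' = Suc k\<close> kL kR
        by (simp add: rep_def add_box_def)
    next
      case False
      then have "\<not> (row_label lam i = k \<and> col_label lam j = Suc k)" using x ij by auto
      then show ?thesis using False x ro co True by (auto simp: rep_def add_box_def)
    qed
  next
    case False
    then have ne: "x \<noteq> (k, Suc k)" using x kL kR by auto
    have "rep lam (add_box lam k a f) (l, r') = 0" "rep lam f (l, r') = 0"
      using False by (auto simp: rep_def)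
    then show ?thesis using x ne by auto
  qed
qed

lemma add_box_none:
  assumes "\<not> (\<exists>i0 j0. (i0, j0) \<in> Fer lam \<and> row_label lam i0 = k \<and> col_label lam j0 = Suc k)"
  shows "add_box lam k a g = g"
  using assms by (auto simp: add_box_def fun_eq_iff)

end



lemma ext_prop:
  assumes cox: "coxeter_elem n c" and k: "k \<in> {1..n}" and ic: "is_initial n k c \<or> is_final n k c"
    and p: "is_dpath (AR_sub_vertices n k) (AR_arrow c) p"
  shows "\<exists>p'. is_dpath (AR_sub_vertices n k) (AR_arrow c) p' \<and> set p \<subseteq> set p' \<and> (k, Suc k) \<in> set p'"
proof -
  let ?V = "AR_sub_vertices n k" and ?E = "AR_arrow c"
  obtain ws where ws: "distinct ws" "set ws = {1..n}" and cw: "c = word_prod ws"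
    using cox unfolding coxeter_elem_def by blast
  obtain cs where cs: "distinct cs" "set cs = {1..Suc n}" "word_prod ws = cycle_of_list cs"
    using cox_cycle[OF ws] by blast
  have cc: "c = cycle_of_list cs" using cw cs(3) by simp
  have k1: "1 \<le> k" "k \<le> n" using k by auto
  have pne: "p \<noteq> []" "set p \<subseteq> ?V" using p by (auto simp: is_dpath_def)
  show ?thesis
  proof (cases "is_final n k c")
    case True
    have f12: "k < c k \<and> c (Suc k) \<le> k" by (rule final_facts[OF ws cw k True])
    have "k \<in> set ws" using k ws(2) by simp
    then have one: "crs c k = 1" using crs_cox[OF ws(1), of k] cw by simp
    have f34: "(\<forall>l\<le>k. l \<noteq> k \<longrightarrow> c l \<le> k) \<and> (\<forall>r. k < r \<longrightarrow> r \<noteq> Suc k \<longrightarrow> k < c r)"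
      using final_more[OF cc one] f12 by blast
    have f4: "\<forall>r. k < r \<longrightarrow> r \<le> Suc n \<longrightarrow> r \<noteq> Suc k \<longrightarrow> k < c r" using f34 by blast
    have lV: "last p \<in> ?V" using pne by auto
    have "reach ?V ?E (last p) (k, Suc k)"
      using ar_reach_final[OF cs(1) cs(2) cc k1 _ _ _ f4 lV] f12 f34 by blast
    then show ?thesis using extend_sink[OF _ p HOL.refl] by blast
  next
    case False
    then have ini: "is_initial n k c" using ic by blast
    have i1: "\<forall>l\<le>k. c l \<noteq> k \<and> c l \<le> Suc k" by (rule initial_facts[OF ws cw k ini])
    have hV: "hd p \<in> ?V" using pne by auto
    have "reach ?V ?E (k, Suc k) (hd p)"
      by (rule ar_reach_initial[OF cs(1) cs(2) cc k1 i1 hV])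
    then obtain p' where p': "is_dpath ?V ?E p'" "set p \<subseteq> set p'" "hd p' = (k, Suc k)"
      using extend_source[OF _ p HOL.refl] by blast
    have "p' \<noteq> []" using p'(1) by (simp add: is_dpath_def)
    then have "(k, Suc k) \<in> set p'" using p'(3) hd_in_set by force
    then show ?thesis using p' by blast
  qed
qed

lemma finite_AR: "finite (AR_sub_vertices n k)"
proof -
  have "AR_sub_vertices n k \<subseteq> {..Suc n} \<times> {..Suc n}" by (auto simp: AR_sub_vertices_def)
  then show ?thesis by (rule finite_subset) simp
qed

theorem theorem6p15:
  fixes n :: nat and lam :: "nat list" and c :: "nat \<Rightarrow> nat" and k a :: nat
    and f :: "nat \<times> nat \<Rightarrow> nat"
  assumes "1 \<le> n"
    and "is_partition lam"
    and "part lam 1 + length lam - 1 = n"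
    and "coxeter_elem n c"
    and "k \<in> {1..n}"
    and "is_final n k (c_lam n lam)"
    and "is_initial n k c \<or> is_final n k c"
  shows "\<forall>b\<in>Fer lam. RSK n lam c (add_box lam k a f) b = add_box lam k a (RSK n lam c f) b"
proof
  fix b assume bF: "b \<in> Fer lam"
  obtain i j where b: "b = (i, j)" by (cases b)
  show "RSK n lam c (add_box lam k a f) b = add_box lam k a (RSK n lam c f) b"
  proof (cases "\<exists>i0 j0. (i0, j0) \<in> Fer lam \<and> row_label lam i0 = k \<and> col_label lam j0 = Suc k")
    case False
    show ?thesis using add_box_none[OF assms(2) False] by simp
  next
    case True
    then obtain i0 j0 where box: "(i0, j0) \<in> Fer lam" "row_label lam i0 = k" "col_label lam j0 = Suc k"
      by blast
    have cor: "part lam i0 = j0" "col_len lam j0 = i0" "part lam 1 + i0 - j0 = k"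
      using corner[OF assms(2) box] by auto
    define kk where "kk = part lam 1 + i - j"
    define dl where "dl = delta_max lam kk - min i j + 1"
    let ?V = "AR_sub_vertices n kk"
    let ?v = "(k, Suc k)"
    have R: "RSK n lam c g b = GK_part ?V (AR_arrow c) (rep lam g) dl" for g
      using bF b by (simp add: RSK_def kk_def dl_def Let_def)
    have RA: "rep lam (add_box lam k a f) = (\<lambda>x. rep lam f x + (if x = ?v then a else 0))"
      by (rule rep_add[OF assms(2) box])
    have fb: "i \<in> {1..length lam}" "j \<in> {1..part lam 1}" using Fer_bounds[OF assms(2)] bF b by force+
    have fb0: "i0 \<in> {1..length lam}" "j0 \<in> {1..part lam 1}" using Fer_bounds[OF assms(2) box(1)] by force+
    have lab: "(row_label lam i = k \<and> col_label lam j = Suc k) = (b = (i0, j0))"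
    proof
      assume "row_label lam i = k \<and> col_label lam j = Suc k"
      then show "b = (i0, j0)" using row_label_inj[OF assms(2) fb(1) fb0(1)] col_label_inj[OF assms(2) fb(2) fb0(2)] box b
        by simp
    next
      assume "b = (i0, j0)"
      then show "row_label lam i = k \<and> col_label lam j = Suc k" using box b by simp
    qed
    have AB: "add_box lam k a (RSK n lam c f) b = RSK n lam c f b + (if b = (i0, j0) then a else 0)"
      using bF b lab by (auto simp: add_box_def)
    show ?thesis
    proof (cases "kk = k")
      case False
      have "?v \<notin> ?V" using False by (auto simp: AR_sub_vertices_def)
      then have "GK_part ?V (AR_arrow c) (rep lam (add_box lam k a f)) dl = GK_part ?V (AR_arrow c) (rep lam f) dl"
        unfolding RA by (intro GK_part_cong) auto
      moreover have "b \<noteq> (i0, j0)" using False cor(3) b kk_def by auto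
      ultimately show ?thesis using R AB by simp
    next
      case True
      have vV: "?v \<in> ?V" using True assms(5) by (auto simp: AR_sub_vertices_def)
      have ext: "\<exists>p'. is_dpath ?V (AR_arrow c) p' \<and> set p \<subseteq> set p' \<and> ?v \<in> set p'"
        if "is_dpath ?V (AR_arrow c) p" for p
        using ext_prop[OF assms(4) assms(5) assms(7)] that True by simp
      have dm: "delta_max lam kk = min i0 j0" using delta_corner[OF assms(2) box(1) cor(1)] True cor(3) by simp
      have d1: "(dl = 1) = (b = (i0, j0))"
      proof
        assume "dl = 1"
        show "b = (i0, j0)"
        proof (rule ccontr)
          assume ne: "b \<noteq> (i0, j0)"
          have "part lam 1 + i - j = part lam 1 + i0 - j0" using True cor(3) kk_def by simp
          then have "min i j < min i0 j0" using diag_less[OF assms(2) box(1) cor(1)] bF b ne by simp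
          moreover have "dl = min i0 j0 - min i j + 1" unfolding dl_def dm ..
          ultimately show False using \<open>dl = 1\<close> by linarith
        qed
      next
        assume "b = (i0, j0)"
        then show "dl = 1" using dm dl_def b by simp
      qed
      have "GK_part ?V (AR_arrow c) (rep lam (add_box lam k a f)) dl
          = GK_part ?V (AR_arrow c) (rep lam f) dl + (if dl = 1 then a else 0)"
        unfolding RA using GK_part_add[OF finite_AR vV _ ext] dl_def by simp
      then show ?thesis using R AB d1 by simp
    qed
  qed
qed


end
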